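(* Let $\mathcal{A}$ be a finite set of positive integers, let $w \leqslant z$ be real numbers, and let $m_1, m_2$ be real numbers with $(m_1, m_2) \in \mathcal{U}$. Then $$ S(\mathcal{A}, z) \leqslant S(\mathcal{A}, w) - \frac{m_1 + m_2 - 1}{m_1 m_2} \sum_{w \leqslant p_1 < z} S(\mathcal{A}_{p_1}, w) + \frac{2}{m_1 m_2} \sum_{w \leqslant p_2 < p_1 < z} S(\mathcal{A}_{p_1 p_2}, w). $$
   Context: Throughout, $p, p_1, p_2, \dots$ denote prime numbers. For a finite set $\mathcal{A}$ of positive integers and a positive integer $d$, $\mathcal{A}_d = \{a : ad \in \mathcal{A}\}$. For real $z$, $S(\mathcal{A}, z)$ denotes the number of $a \in \mathcal{A}$ having no prime factor less than $z$. Let $T = (0,1] \cup [2,3] \cup [4,5] \cup \cdots$, i.e. $T$ is the union of $(0,1]$ and the intervals $[k-1,k]$ over all odd integers $k \geqslant 3$, and let $\mathcal{U} = \{(x_1, x_2) : x_1, x_2 \in T,\ |x_1 - x_2| \leqslant 1\}$. *)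

theory Defs
  imports Complex_Main "HOL-Computational_Algebra.Primes"
begin

definition sieve_sub :: "nat set \<Rightarrow> nat \<Rightarrow> nat set" where
  "sieve_sub A d = {a. a * d \<in> A}"

definition sift :: "nat set \<Rightarrow> real \<Rightarrow> nat" where
  "sift A z = card {a \<in> A. \<forall>p. prime p \<and> real p < z \<longrightarrow> \<not> p dvd a}"

text \<open>T = (0,1] \<union> [2,3] \<union> [4,5] \<union> ...\<close>
definition T_set :: "real set" where
  "T_set = {x. 0 < x \<and> x \<le> 1} \<union>
           {x. \<exists>k::nat. odd k \<and> 3 \<le> k \<and> real k - 1 \<le> x \<and> x \<le> real k}"

definition U_set :: "(real \<times> real) set" where
  "U_set = {(x1, x2). x1 \<in> T_set \<and> x2 \<in> T_set \<and> \<bar>x1 - x2\<bar> \<le> 1}"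

end

theory Submission
  imports Defs
begin

definition rough :: "real \<Rightarrow> nat \<Rightarrow> bool" where
  "rough w a \<longleftrightarrow> (\<forall>p. prime p \<and> real p < w \<longrightarrow> \<not> p dvd a)"

lemma sift_sub:
  assumes "d > 0" "\<And>q. prime q \<Longrightarrow> q dvd d \<Longrightarrow> w \<le> real q"
  shows "sift (sieve_sub A d) w = card {a\<in>A. rough w a \<and> d dvd a}"
proof -
  have r: "rough w (b*d) \<longleftrightarrow> rough w b" for b
  proof -
    have "(prime p \<and> real p < w \<longrightarrow> \<not> p dvd b*d) \<longleftrightarrow> (prime p \<and> real p < w \<longrightarrow> \<not> p dvd b)" for p
    proof (cases "prime p \<and> real p < w")
      case True
      have "\<not> p dvd d"
      proof
        assume "p dvd d"
        then have "w \<le> real p" using assms(2) True by blast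
        then show False using True by linarith
      qed
      then show ?thesis using True by (simp add: prime_dvd_mult_iff)
    qed auto
    then show ?thesis unfolding rough_def by blast
  qed
  have img: "(\<lambda>b. b*d) ` {a \<in> sieve_sub A d. \<forall>p. prime p \<and> real p < w \<longrightarrow> \<not> p dvd a}
      = {a\<in>A. rough w a \<and> d dvd a}"
  proof (intro equalityI subsetI)
    fix x assume "x \<in> (\<lambda>b. b*d) ` {a \<in> sieve_sub A d. \<forall>p. prime p \<and> real p < w \<longrightarrow> \<not> p dvd a}"
    then obtain b where "x = b*d" "b*d \<in> A" "rough w b" unfolding sieve_sub_def rough_def by auto
    then show "x \<in> {a\<in>A. rough w a \<and> d dvd a}" using r by auto
  next
    fix x assume "x \<in> {a\<in>A. rough w a \<and> d dvd a}"
    then have xx: "x \<in> A" "rough w x" "d dvd x" by auto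
    then obtain b where "x = b*d" by (metis dvdE mult.commute)
    have "b \<in> {a \<in> sieve_sub A d. \<forall>p. prime p \<and> real p < w \<longrightarrow> \<not> p dvd a}"
      using xx r \<open>x = b*d\<close> unfolding sieve_sub_def by (auto simp: rough_def[symmetric])
    then show "x \<in> (\<lambda>b. b*d) ` {a \<in> sieve_sub A d. \<forall>p. prime p \<and> real p < w \<longrightarrow> \<not> p dvd a}"
      using \<open>x = b*d\<close> by blast
  qed
  have inj: "inj_on (\<lambda>b. b*d) X" for X using assms(1) by (auto simp: inj_on_def)
  have "card ((\<lambda>b. b*d) ` {a \<in> sieve_sub A d. \<forall>p. prime p \<and> real p < w \<longrightarrow> \<not> p dvd a})
     = card {a \<in> sieve_sub A d. \<forall>p. prime p \<and> real p < w \<longrightarrow> \<not> p dvd a}"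
    by (rule card_image[OF inj])
  then show ?thesis unfolding sift_def img by simp
qed

lemma card_swap:
  assumes "finite I" "finite S"
  shows "(\<Sum>x\<in>I. real (card {a\<in>S. P x a})) = (\<Sum>a\<in>S. real (card {x\<in>I. P x a}))"
proof -
  have c: "real (card {y\<in>Y. Q y}) = (\<Sum>y\<in>Y. if Q y then 1 else 0)" if "finite Y" for Y and Q :: "'c \<Rightarrow> bool"
    using that by (simp add: sum.inter_filter[symmetric])
  show ?thesis using assms by (simp add: c sum.swap[of _ I S])
qed

lemma card_pairs:
  fixes S :: "nat set"
  assumes "finite S"
  shows "2 * card {(x,y). x\<in>S \<and> y\<in>S \<and> y<x} = card S * (card S - 1)"
proof -
  define L where "L = {(x,y). x\<in>S \<and> y\<in>S \<and> y<x}"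
  define G where "G = {(x,y). x\<in>S \<and> y\<in>S \<and> x<y}"
  define D where "D = {(x,y). x\<in>S \<and> y\<in>S \<and> x=y}"
  have SS: "S \<times> S = L \<union> G \<union> D" unfolding L_def G_def D_def by auto
  have fin: "finite L" "finite G" "finite D" using assms unfolding L_def G_def D_def
    by (auto intro: finite_subset[of _ "S \<times> S"])
  have "G = prod.swap ` L" unfolding L_def G_def by auto
  then have cG: "card G = card L" by (simp add: card_image)
  have "D = (\<lambda>x. (x,x)) ` S" unfolding D_def by auto
  then have cD: "card D = card S" by (simp add: card_image inj_on_def)
  have "card (S \<times> S) = card L + card G + card D"
  proof -
    have d1: "L \<inter> G = {}" "(L \<union> G) \<inter> D = {}" unfolding L_def G_def D_def by auto
    have "card (L \<union> G \<union> D) = card (L \<union> G) + card D"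
      using fin d1 by (intro card_Un_disjoint) auto
    also have "card (L \<union> G) = card L + card G" using fin d1 by (intro card_Un_disjoint) auto
    finally show ?thesis unfolding SS by simp
  qed
  then have "card S * card S = 2 * card L + card S" using cG cD by (simp add: card_cartesian_product)
  then show ?thesis unfolding L_def by (simp add: algebra_simps diff_mult_distrib2)
qed

lemma T_gap:
  assumes "x \<in> T_set" "y \<in> T_set" "x < real n" "real n < y"
  shows "y - x > 1"
proof -
  have tk: "\<exists>k::nat. odd k \<and> real k - 1 \<le> t \<and> t \<le> real k" if "t \<in> T_set" for t
  proof (cases "t \<le> 1")
    case True then show ?thesis using that unfolding T_set_def by (intro exI[of _ 1]) auto
  next
    case False then show ?thesis using that unfolding T_set_def by auto
  qed
  obtain k :: nat where k: "odd k" "real k - 1 \<le> x" "x \<le> real k"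
    using tk[OF assms(1)] by blast
  obtain j :: nat where j: "odd j" "real j - 1 \<le> y" "y \<le> real j"
    using tk[OF assms(2)] by blast
  show ?thesis
  proof (rule ccontr)
    assume "\<not> ?thesis"
    then have le: "y \<le> x + 1" by simp
    have "n \<ge> k" using k assms by linarith
    moreover have "n \<le> k" using k assms le by linarith
    ultimately have nk: "n = k" by simp
    have "n < j" using j assms by linarith
    then have "j \<ge> k + 2" using nk k j by presburger
    then show False using j k le assms nk by linarith
  qed
qed

lemma pointwise:
  assumes "(m1, m2) \<in> U_set"
  shows "(if n = 0 then 1 else 0) \<le> 1 - (m1 + m2 - 1) / (m1 * m2) * real n
          + 2 / (m1 * m2) * (real n * (real n - 1) / 2)"
proof -
  have m: "m1 \<in> T_set" "m2 \<in> T_set" "\<bar>m1 - m2\<bar> \<le> 1" using assms unfolding U_set_def by auto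
  have pos: "m1 > 0" "m2 > 0" using m(1,2) unfolding T_set_def by auto
  have pp: "m1 * m2 > 0" using pos by simp
  have eq: "1 - (m1 + m2 - 1) / (m1 * m2) * real n + 2 / (m1 * m2) * (real n * (real n - 1) / 2)
      = (real n - m1) * (real n - m2) / (m1 * m2)"
    using pos by (simp add: field_simps)
  have "(real n - m1) * (real n - m2) \<ge> 0"
  proof (rule ccontr)
    assume "\<not> ?thesis"
    then have "(m1 < real n \<and> real n < m2) \<or> (m2 < real n \<and> real n < m1)"
      by (smt (verit) mult_nonneg_nonneg mult_nonpos_nonpos)
    then show False using T_gap[OF m(1,2)] T_gap[OF m(2,1)] m(3) by force
  qed
  then have "0 \<le> (real n - m1) * (real n - m2) / (m1 * m2)" using pp by simp
  moreover have "n = 0 \<Longrightarrow> (real n - m1) * (real n - m2) / (m1 * m2) = 1" using pos by simp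
  ultimately show ?thesis unfolding eq by auto
qed

theorem theorem2:
  fixes A :: "nat set" and w z m1 m2 :: real
  assumes "finite A" and "\<forall>a\<in>A. 0 < a"
    and "w \<le> z"
    and "(m1, m2) \<in> U_set"
  shows "real (sift A z) \<le> real (sift A w)
     - (m1 + m2 - 1) / (m1 * m2) *
         (\<Sum>p1\<in>{p. prime p \<and> w \<le> real p \<and> real p < z}. real (sift (sieve_sub A p1) w))
     + 2 / (m1 * m2) *
         (\<Sum>(p1, p2)\<in>{(p1, p2). prime p1 \<and> prime p2 \<and> w \<le> real p2 \<and> p2 < p1 \<and> real p1 < z}.
              real (sift (sieve_sub A (p1 * p2)) w))"
proof -
  define R where "R = {a\<in>A. rough w a}"
  define P where "P = {p. prime p \<and> w \<le> real p \<and> real p < z}"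
  define Q where "Q = {(p1, p2). prime p1 \<and> prime p2 \<and> w \<le> real p2 \<and> p2 < p1 \<and> real p1 < z}"
  define N where "N a = {p\<in>P. p dvd a}" for a
  define c where "c = (m1 + m2 - 1) / (m1 * m2)"
  define e where "e = 2 / (m1 * m2)"
  have finR: "finite R" using assms(1) unfolding R_def by simp
  have pz: "p \<le> nat \<lceil>z\<rceil>" if "real p < z" for p :: nat
  proof -
    have "real_of_int (int p) \<le> of_int \<lceil>z\<rceil>" using le_of_int_ceiling[of z] that by simp linarith
    then have "int p \<le> \<lceil>z\<rceil>" by (simp only: of_int_le_iff)
    then show ?thesis by (simp add: le_nat_iff)
  qed
  have Pb: "P \<subseteq> {..nat \<lceil>z\<rceil>}" unfolding P_def using pz by auto
  then have finP: "finite P" by (rule finite_subset) simp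
  have "Q \<subseteq> P \<times> P" unfolding Q_def P_def by auto
  then have finQ: "finite Q" using finP by (meson finite_SigmaI finite_subset)
  have finN: "finite (N a)" for a unfolding N_def using finP by simp
  have h1: "real (sift A z) \<le> (\<Sum>a\<in>R. if card (N a) = 0 then 1 else 0)"
  proof -
    have "{a \<in> A. \<forall>p. prime p \<and> real p < z \<longrightarrow> \<not> p dvd a} \<subseteq> {a\<in>R. card (N a) = 0}"
      unfolding R_def N_def P_def rough_def using assms(3) finP by (auto simp: card_eq_0_iff)
    then have "sift A z \<le> card {a\<in>R. card (N a) = 0}"
      unfolding sift_def using finR by (intro card_mono) auto
    also have "real (card {a\<in>R. card (N a) = 0}) = (\<Sum>a\<in>R. if card (N a) = 0 then 1 else 0)"
      using finR by (simp add: sum.inter_filter[symmetric])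
    finally show ?thesis by simp
  qed
  have h2: "sift A w = card R" unfolding sift_def R_def rough_def by simp
  have h3: "(\<Sum>p1\<in>P. real (sift (sieve_sub A p1) w)) = (\<Sum>a\<in>R. real (card (N a)))"
  proof -
    have "sift (sieve_sub A p) w = card {a\<in>R. p dvd a}" if "p \<in> P" for p
    proof -
      have "sift (sieve_sub A p) w = card {a\<in>A. rough w a \<and> p dvd a}"
        using that unfolding P_def
        by (intro sift_sub) (auto simp: prime_gt_0_nat dest: primes_dvd_imp_eq)
      then show ?thesis unfolding R_def by (simp add: conj_assoc)
    qed
    then have "(\<Sum>p1\<in>P. real (sift (sieve_sub A p1) w)) = (\<Sum>p\<in>P. real (card {a\<in>R. p dvd a}))"
      by simp
    also have "\<dots> = (\<Sum>a\<in>R. real (card {p\<in>P. p dvd a}))" by (rule card_swap[OF finP finR])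
    finally show ?thesis unfolding N_def .
  qed
  have h4: "(\<Sum>(p1, p2)\<in>Q. real (sift (sieve_sub A (p1 * p2)) w))
     = (\<Sum>a\<in>R. real (card {(x,y). x\<in>N a \<and> y\<in>N a \<and> y<x}))"
  proof -
    have "sift (sieve_sub A (fst q * snd q)) w = card {a\<in>R. fst q * snd q dvd a}" if qQ: "q \<in> Q" for q
    proof -
      obtain p1 p2 where q: "q = (p1, p2)" "prime p1" "prime p2" "w \<le> real p2" "p2 < p1"
        using qQ unfolding Q_def by (cases q) auto
      have "sift (sieve_sub A (p1*p2)) w = card {a\<in>A. rough w a \<and> p1*p2 dvd a}"
      proof (intro sift_sub)
        show "0 < p1*p2" using q by (simp add: prime_gt_0_nat)
        fix r assume "prime r" "r dvd p1*p2"
        then have "r = p1 \<or> r = p2" using q by (auto simp: prime_dvd_mult_iff dest: primes_dvd_imp_eq)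
        then show "w \<le> real r" using q by auto
      qed
      then show ?thesis unfolding R_def q by (simp add: conj_assoc)
    qed
    then have "(\<Sum>(p1, p2)\<in>Q. real (sift (sieve_sub A (p1 * p2)) w))
        = (\<Sum>q\<in>Q. real (card {a\<in>R. fst q * snd q dvd a}))"
      by (intro sum.cong) auto
    also have "\<dots> = (\<Sum>a\<in>R. real (card {q\<in>Q. fst q * snd q dvd a}))" by (rule card_swap[OF finQ finR])
    also have "\<dots> = (\<Sum>a\<in>R. real (card {(x,y). x\<in>N a \<and> y\<in>N a \<and> y<x}))"
    proof (intro sum.cong refl arg_cong[where f="\<lambda>X. real (card X)"])
      fix a
      show "{q\<in>Q. fst q * snd q dvd a} = {(x,y). x\<in>N a \<and> y\<in>N a \<and> y<x}"
      proof (intro equalityI subsetI)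
        fix q assume "q \<in> {q\<in>Q. fst q * snd q dvd a}"
        then show "q \<in> {(x,y). x\<in>N a \<and> y\<in>N a \<and> y<x}"
          unfolding Q_def N_def P_def by (auto intro: dvd_mult_left dvd_mult_right)
      next
        fix q assume "q \<in> {(x,y). x\<in>N a \<and> y\<in>N a \<and> y<x}"
        then obtain x y where q: "q = (x,y)" "prime x" "prime y" "x dvd a" "y dvd a" "y < x"
          "w \<le> real y" "real x < z"
          unfolding N_def P_def by auto
        have "coprime x y" using q by (simp add: primes_coprime)
        then have "x * y dvd a" using q by (simp add: divides_mult)
        then show "q \<in> {q\<in>Q. fst q * snd q dvd a}" using q unfolding Q_def by auto
      qed
    qed
    finally show ?thesis .
  qed
  have h5: "real (card {(x,y). x\<in>N a \<and> y\<in>N a \<and> y<x}) = real (card (N a)) * (real (card (N a)) - 1) / 2" for a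
  proof -
    have "real (2 * card {(x,y). x\<in>N a \<and> y\<in>N a \<and> y<x}) = real (card (N a) * (card (N a) - 1))"
      using card_pairs[OF finN[of a]] by metis
    then show ?thesis by (cases "card (N a)") (auto simp: of_nat_diff algebra_simps)
  qed
  have "real (sift A z) \<le> (\<Sum>a\<in>R. 1 - c * real (card (N a)) + e * (real (card (N a)) * (real (card (N a)) - 1) / 2))"
    using h1 pointwise[OF assms(4)] unfolding c_def e_def
    by (smt (verit) sum_mono)
  also have "\<dots> = real (card R) - c * (\<Sum>a\<in>R. real (card (N a))) + e * (\<Sum>a\<in>R. real (card {(x,y). x\<in>N a \<and> y\<in>N a \<and> y<x}))"
    by (simp add: h5 sum.distrib sum_subtractf sum_distrib_left)
  finally show ?thesis unfolding h2 h3[unfolded P_def] h4[unfolded Q_def] c_def e_def P_def Q_def by simp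
qed

end
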